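(* Let $p\ge1$ be an integer. For all $x,y\in[0,1]^p$, $\overline{\Delta}_{\mathrm{JML1}}(x,y)\le\overline{\Delta}_{\mathrm{JML2}}(x,y)$.
   Context: For $x,y \in [0,1]^p$ write $\|x\|_1=\sum_{i=1}^p |x_i|$ and $\langle x,y\rangle=\sum_{i=1}^p x_iy_i$. Define $\overline{\Delta}_{\mathrm{JML1}}(x,y) = 1 - \frac{\|x\|_1+\|y\|_1-\|x-y\|_1}{\|x\|_1+\|y\|_1+\|x-y\|_1}$ and $\overline{\Delta}_{\mathrm{JML2}}(x,y) = 1 - \frac{\langle x,y\rangle}{\langle x,y\rangle+\|x-y\|_1}$. Both denominators vanish only when $x=y=0$; by convention both functions take the value $0$ at $(x,y)=(0,0)$. *)

theory Defs
  imports "HOL-Analysis.Analysis"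
begin

definition l1norm :: "real ^ 'p \<Rightarrow> real" where
  "l1norm x = (\<Sum>i\<in>UNIV. \<bar>x $ i\<bar>)"

definition ip :: "real ^ 'p \<Rightarrow> real ^ 'p \<Rightarrow> real" where
  "ip x y = (\<Sum>i\<in>UNIV. x $ i * y $ i)"

definition JML1 :: "real ^ 'p \<Rightarrow> real ^ 'p \<Rightarrow> real" where
  "JML1 x y = (if x = 0 \<and> y = 0 then 0 else
     1 - (l1norm x + l1norm y - l1norm (x - y)) / (l1norm x + l1norm y + l1norm (x - y)))"

definition JML2 :: "real ^ 'p \<Rightarrow> real ^ 'p \<Rightarrow> real" where
  "JML2 x y = (if x = 0 \<and> y = 0 then 0 else
     1 - ip x y / (ip x y + l1norm (x - y)))"

end

theory Submission
  imports Defs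
begin

lemma key:
  fixes s m d :: real
  assumes "0 \<le> s" "s \<le> m" "0 \<le> d" "0 < m + d"
  shows "1 - m / (m + d) \<le> 1 - s / (s + d)"
proof (cases "s + d = 0")
  case True thus ?thesis using assms by simp
next
  case False
  hence "s + d > 0" using assms by linarith
  have "s * (m + d) \<le> m * (s + d)" using assms by (simp add: algebra_simps mult_left_mono)
  hence "s / (s + d) \<le> m / (m + d)" using \<open>s + d > 0\<close> assms(4)
    by (simp add: divide_simps mult.commute)
  thus ?thesis by simp
qed

theorem theorem4:
  fixes x y :: "real ^ 'p"
  assumes "\<forall>i. 0 \<le> x $ i \<and> x $ i \<le> 1"
    and "\<forall>i. 0 \<le> y $ i \<and> y $ i \<le> 1"
  shows "JML1 x y \<le> JML2 x y"
proof (cases "x = 0 \<and> y = 0")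
  case True thus ?thesis by (simp add: JML1_def JML2_def)
next
  case False
  define m where "m = (\<Sum>i\<in>UNIV. min (x $ i) (y $ i))"
  define d where "d = l1norm (x - y)"
  define s where "s = ip x y"
  have e1: "l1norm x + l1norm y - l1norm (x - y) = 2 * m"
    unfolding l1norm_def m_def sum_distrib_left sum.distrib[symmetric] sum_subtractf[symmetric]
    by (rule sum.cong) (use assms in \<open>auto simp: min_def\<close>)
  have e2: "l1norm x + l1norm y + l1norm (x - y) = 2 * (m + d)"
    using e1 unfolding d_def by simp
  have d0: "0 \<le> d" unfolding d_def l1norm_def by (simp add: sum_nonneg)
  have s0: "0 \<le> s" unfolding s_def ip_def using assms by (simp add: sum_nonneg)
  have sm: "s \<le> m" unfolding s_def ip_def m_def
  proof (rule sum_mono)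
    fix i
    have a: "0 \<le> x $ i" "x $ i \<le> 1" "0 \<le> y $ i" "y $ i \<le> 1" using assms by auto
    have "x $ i * y $ i \<le> x $ i" using a mult_left_le[of "y $ i" "x $ i"] by simp
    moreover have "x $ i * y $ i \<le> y $ i" using a mult_left_le[of "x $ i" "y $ i"] by (simp add: mult.commute)
    ultimately show "x $ i * y $ i \<le> min (x $ i) (y $ i)" by simp
  qed
  have pos: "0 < m + d"
  proof -
    obtain i where "x $ i \<noteq> 0 \<or> y $ i \<noteq> 0" using False by (metis vec_eq_iff zero_index)
    hence "0 < \<bar>x $ i\<bar> + \<bar>y $ i\<bar>" by auto
    also have "\<dots> \<le> l1norm x + l1norm y" unfolding l1norm_def
      by (intro add_mono member_le_sum) auto
    also have "\<dots> \<le> 2 * (m + d)" using e2 d0 unfolding d_def l1norm_def by (simp add: sum_nonneg)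
    finally show ?thesis by simp
  qed
  have "JML1 x y = 1 - m / (m + d)" using False
  proof -
    have "2 * m / (2 * m + 2 * d) = m / (m + d)" by (metis distrib_left mult_divide_mult_cancel_left_if zero_neq_numeral)
    thus ?thesis unfolding JML1_def if_not_P[OF False] e1 e2 by simp
  qed
  moreover have "JML2 x y = 1 - s / (s + d)" unfolding JML2_def if_not_P[OF False] s_def d_def by (rule refl)
  ultimately show ?thesis using key[OF s0 sm d0 pos] by simp
qed

end
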